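(* For every (possibly infinite) $\mathcal{A}\subseteq\mathbb{A}$, every (reachable) state $s$ of a $\$$-bounded contract and every finite sequence of transactions $\vec{Y}$: (1) $\mathrm{xG}_{\mathcal{A}}(s,\vec{Y})$ is defined and is a finite integer; (2) if $\mathrm{xG}_{\mathcal{A}}(s,\vec{Y})>0$ then $\vec{Y}\notin\kappa_{\mathcal{A}}(\emptyset)^*$; (3) there exists a finite $\mathcal{A}_0\subseteq\mathcal{A}$ such that for every $\mathcal{B}$ with $\mathcal{A}_0\subseteq\mathcal{B}\subseteq\mathcal{A}$, $\mathrm{xG}_{\mathcal{A}_0}(s,\vec{Y})=\mathrm{xG}_{\mathcal{B}}(s,\vec{Y})$.
   Context: Fix a countably infinite set $\mathbb{A}$ of actors, a set $\mathbb{T}$ of token types and a set $\mathbb{X}$ of transactions. A wallet is a function $\mathbb{T}\to\mathbb{N}$; $\mathbb{W}_{\mathrm{fin}}$ is the set of finite-support wallets. A wallet state is $W:\mathbb{A}\to(\mathbb{T}\to\mathbb{N})$ satisfying the finite tokens axiom $\sum_{\tau}\sum_{a\in\mathbb{A}}W(a)(\tau)\in\mathbb{N}$. A contract consists of blockchain states $\mathbb{S}=\mathbb{C}\times\mathbb{W}$ (contract state, wallet state), a partial transition function $\mapsto:(\mathbb{S}\times\mathbb{X})\rightharpoonup\mathbb{S}$ and initial states $\mathbb{S}_0$. A transaction $x$ is valid in $s$ if $s\xmapsto{x}s'$ for some $s'$. For finite sequences, $s\xrightarrow{\varepsilon}s$, and $s\xrightarrow{\vec{Y}x}s'$ iff either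 $s\xrightarrow{\vec{Y}}s''\xmapsto{x}s'$, or $s\xrightarrow{\vec{Y}}s'$ and $x$ is not valid in $s'$. $s$ is reachable if $s_0\xrightarrow{\vec X}s$ for some $s_0\in\mathbb{S}_0$ and some $\vec X$. $W_{\mathcal{A}}(s)=\sum_{a\in\mathcal{A}}W(s)(a)$. A wealth function is an additive map $\$:\mathbb{W}_{\mathrm{fin}}\to\mathbb{N}$; $\$_{\mathcal{A}}(s)=\$(W_{\mathcal{A}}(s))$; the gain is $G_{\mathcal{A}}(s,\vec{X})=\$_{\mathcal{A}}(s')-\$_{\mathcal{A}}(s)$ where $s\xrightarrow{\vec X}s'$. The contract is $\$$-bounded if for every $s_0\in\mathbb{S}_0$ there is $n$ such that $\$_{\mathbb{A}}(s)<n$ for all $s$ reachable from $s_0$. A transaction deducibility function $\kappa:\mathcal{P}(\mathbb{A})\times\mathcal{P}(\mathbb{X})\to\mathcal{P}(\mathbb{X})$, $(\mathcal{A},\mathcal{X})\mapsto\kappa_{\mathcal{A}}(\mathcal{X})$, satisfies: extensivity $\mathcal{X}\subseteq\kappa_{\mathcal{A}}(\mathcal{X})$; idempotence $\kappa_{\mathcal{A}}(\kappa_{\mathcal{A}}(\mathcal{X}))=\kappa_{\mathcal{A}}(\mathcal{X})$; monotonicity in both arguments; continuity $\kappa_{\mathcal{A}}(\bigcup_i\mathcal{X}_i)=\bigcup_i\kappa_{\mathcal{A}}(\mathcal{X}_i)$ for increasing chains; finite causes (every finite $\mathcal{X}_0$ is contained in $\kappa_{\mathcal{A}_0}(\emptyset)$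 for some finite $\mathcal{A}_0$); private knowledge ($\kappa_{\mathcal{A}}(\emptyset)\subseteq\kappa_{\mathcal{A}'}(\emptyset)$ implies $\mathcal{A}\subseteq\mathcal{A}'$); no shared secrets ($\kappa_{\mathcal{A}}(\mathcal{X})\cap\kappa_{\mathcal{B}}(\mathcal{X})\subseteq\kappa_{\mathcal{A}\cap\mathcal{B}}(\mathcal{X})$). $\mathcal{X}^*$ denotes the finite sequences over $\mathcal{X}$. The unrealized gain is $\mathrm{uG}_{\mathcal{A}}(s)=\max\{G_{\mathcal{A}}(s,\vec{Y}):\vec{Y}\in\kappa_{\mathcal{A}}(\emptyset)^*\}$, and the external gain is $\mathrm{xG}_{\mathcal{A}}(s,\vec{Y})=G_{\mathcal{A}}(s,\vec{Y})-\mathrm{uG}_{\mathcal{A}}(s)$. *)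

theory Defs
  imports "HOL-Library.Countable_Set"
begin

type_synonym ('a,'t) wstate = "'a \<Rightarrow> 't \<Rightarrow> nat"
type_synonym ('c,'a,'t) bstate = "'c \<times> ('a,'t) wstate"

text \<open>Finite tokens axiom: only finitely many (actor, token) pairs hold a nonzero amount,
  i.e. the double sum of all balances is a natural number.\<close>
definition finite_tokens :: "('a,'t) wstate \<Rightarrow> bool" where
  "finite_tokens W \<longleftrightarrow> finite {(a,\<tau>). W a \<tau> \<noteq> 0}"

definition wallet_fin :: "('t \<Rightarrow> nat) \<Rightarrow> bool" where
  "wallet_fin w \<longleftrightarrow> finite {\<tau>. w \<tau> \<noteq> 0}"

definition wealth_fun :: "(('t \<Rightarrow> nat) \<Rightarrow> nat) \<Rightarrow> bool" where
  "wealth_fun f \<longleftrightarrow> (\<forall>w w'. wallet_fin w \<longrightarrow> wallet_fin w' \<longrightarrow>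
      f (\<lambda>\<tau>. w \<tau> + w' \<tau>) = f w + f w')"

definition contract :: "(('c,'a,'t) bstate \<Rightarrow> 'x \<Rightarrow> ('c,'a,'t) bstate option)
    \<Rightarrow> ('c,'a,'t) bstate set \<Rightarrow> bool" where
  "contract step S0 \<longleftrightarrow> (\<forall>s\<in>S0. finite_tokens (snd s)) \<and>
     (\<forall>s x s'. finite_tokens (snd s) \<longrightarrow> step s x = Some s' \<longrightarrow> finite_tokens (snd s'))"

definition run :: "('s \<Rightarrow> 'x \<Rightarrow> 's option) \<Rightarrow> 's \<Rightarrow> 'x list \<Rightarrow> 's" where
  "run step s X = foldl (\<lambda>t x. case step t x of Some t' \<Rightarrow> t' | None \<Rightarrow> t) s X"

definition reachable_from :: "('s \<Rightarrow> 'x \<Rightarrow> 's option) \<Rightarrow> 's \<Rightarrow> 's \<Rightarrow> bool" where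
  "reachable_from step s0 s \<longleftrightarrow> (\<exists>X. run step s0 X = s)"

definition reachable :: "('s \<Rightarrow> 'x \<Rightarrow> 's option) \<Rightarrow> 's set \<Rightarrow> 's \<Rightarrow> bool" where
  "reachable step S0 s \<longleftrightarrow> (\<exists>s0\<in>S0. reachable_from step s0 s)"

text \<open>W_A(s): sum of the wallets of the actors in A (finite by the finite tokens axiom).\<close>
definition walletA :: "'a set \<Rightarrow> ('a,'t) wstate \<Rightarrow> 't \<Rightarrow> nat" where
  "walletA A W \<tau> = (\<Sum>a\<in>{a\<in>A. W a \<tau> \<noteq> 0}. W a \<tau>)"

definition wealthA :: "(('t \<Rightarrow> nat) \<Rightarrow> nat) \<Rightarrow> 'a set \<Rightarrow> ('c,'a,'t) bstate \<Rightarrow> nat" where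
  "wealthA f A s = f (walletA A (snd s))"

definition bounded_contract :: "(('t \<Rightarrow> nat) \<Rightarrow> nat)
    \<Rightarrow> (('c,'a,'t) bstate \<Rightarrow> 'x \<Rightarrow> ('c,'a,'t) bstate option) \<Rightarrow> ('c,'a,'t) bstate set \<Rightarrow> bool" where
  "bounded_contract f step S0 \<longleftrightarrow>
     (\<forall>s0\<in>S0. \<exists>n. \<forall>s. reachable_from step s0 s \<longrightarrow> wealthA f UNIV s < n)"

definition gain :: "(('t \<Rightarrow> nat) \<Rightarrow> nat) \<Rightarrow> (('c,'a,'t) bstate \<Rightarrow> 'x \<Rightarrow> ('c,'a,'t) bstate option)
    \<Rightarrow> 'a set \<Rightarrow> ('c,'a,'t) bstate \<Rightarrow> 'x list \<Rightarrow> int" where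
  "gain f step A s Y = int (wealthA f A (run step s Y)) - int (wealthA f A s)"

definition deducibility :: "('a set \<Rightarrow> 'x set \<Rightarrow> 'x set) \<Rightarrow> bool" where
  "deducibility \<kappa> \<longleftrightarrow>
     (\<forall>A X. X \<subseteq> \<kappa> A X) \<and>
     (\<forall>A X. \<kappa> A (\<kappa> A X) = \<kappa> A X) \<and>
     (\<forall>A A' X X'. A \<subseteq> A' \<longrightarrow> X \<subseteq> X' \<longrightarrow> \<kappa> A X \<subseteq> \<kappa> A' X') \<and>
     (\<forall>A C. Complete_Partial_Order.chain (\<subseteq>) C \<longrightarrow> C \<noteq> {} \<longrightarrow> \<kappa> A (\<Union>C) = (\<Union>X\<in>C. \<kappa> A X)) \<and>
     (\<forall>X0. finite X0 \<longrightarrow> (\<exists>A0. finite A0 \<and> X0 \<subseteq> \<kappa> A0 {})) \<and>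
     (\<forall>A A'. \<kappa> A {} \<subseteq> \<kappa> A' {} \<longrightarrow> A \<subseteq> A') \<and>
     (\<forall>A B X. \<kappa> A X \<inter> \<kappa> B X \<subseteq> \<kappa> (A \<inter> B) X)"

definition gains :: "(('t \<Rightarrow> nat) \<Rightarrow> nat) \<Rightarrow> (('c,'a,'t) bstate \<Rightarrow> 'x \<Rightarrow> ('c,'a,'t) bstate option)
    \<Rightarrow> ('a set \<Rightarrow> 'x set \<Rightarrow> 'x set) \<Rightarrow> 'a set \<Rightarrow> ('c,'a,'t) bstate \<Rightarrow> int set" where
  "gains f step \<kappa> A s = {gain f step A s Y | Y. Y \<in> lists (\<kappa> A {})}"

definition uG :: "(('t \<Rightarrow> nat) \<Rightarrow> nat) \<Rightarrow> (('c,'a,'t) bstate \<Rightarrow> 'x \<Rightarrow> ('c,'a,'t) bstate option)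
    \<Rightarrow> ('a set \<Rightarrow> 'x set \<Rightarrow> 'x set) \<Rightarrow> 'a set \<Rightarrow> ('c,'a,'t) bstate \<Rightarrow> int" where
  "uG f step \<kappa> A s = (GREATEST g. g \<in> gains f step \<kappa> A s)"

definition xG :: "(('t \<Rightarrow> nat) \<Rightarrow> nat) \<Rightarrow> (('c,'a,'t) bstate \<Rightarrow> 'x \<Rightarrow> ('c,'a,'t) bstate option)
    \<Rightarrow> ('a set \<Rightarrow> 'x set \<Rightarrow> 'x set) \<Rightarrow> 'a set \<Rightarrow> ('c,'a,'t) bstate \<Rightarrow> 'x list \<Rightarrow> int" where
  "xG f step \<kappa> A s Y = gain f step A s Y - uG f step \<kappa> A s"

end

theory Submission
  imports Defs
begin

lemma run_Cons: "run step s (x#X) = run step (case step s x of Some t' \<Rightarrow> t' | None \<Rightarrow> s) X"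
  by (simp add: run_def)

lemma run_append: "run step s (X@Y) = run step (run step s X) Y"
  by (simp add: run_def)

lemma run_ft:
  assumes "contract step S0" "finite_tokens (snd s)"
  shows "finite_tokens (snd (run step s X))"
  using assms(2)
proof (induction X arbitrary: s)
  case Nil thus ?case by (simp add: run_def)
next
  case (Cons x X)
  have "finite_tokens (snd (case step s x of Some t' \<Rightarrow> t' | None \<Rightarrow> s))"
  proof (cases "step s x")
    case None thus ?thesis using Cons.prems by simp
  next
    case (Some t)
    have st: "\<forall>s x s'. finite_tokens (snd s) \<longrightarrow> step s x = Some s' \<longrightarrow> finite_tokens (snd s')"
      using assms(1) unfolding contract_def by (rule conjunct2)
    have "finite_tokens (snd t)" using st[rule_format, OF Cons.prems Some] .
    thus ?thesis using Some by simp
  qed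
  thus ?case unfolding run_Cons by (rule Cons.IH)
qed

lemma supp_fin:
  assumes "finite_tokens W"
  shows "finite {a. \<exists>\<tau>. W a \<tau> \<noteq> 0}"
proof -
  have sub: "{a. \<exists>\<tau>. W a \<tau> \<noteq> 0} \<subseteq> fst ` {(a,\<tau>). W a \<tau> \<noteq> 0}"
  proof
    fix a assume "a \<in> {a. \<exists>\<tau>. W a \<tau> \<noteq> 0}"
    then obtain \<tau> where "W a \<tau> \<noteq> 0" by blast
    thus "a \<in> fst ` {(a,\<tau>). W a \<tau> \<noteq> 0}" by (intro image_eqI[of _ fst "(a,\<tau>)"]) auto
  qed
  have "finite {(a,\<tau>). W a \<tau> \<noteq> 0}" using assms unfolding finite_tokens_def .
  thus ?thesis by (rule finite_subset[OF sub finite_imageI])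
qed

lemma walletA_fin:
  assumes "finite_tokens W"
  shows "wallet_fin (walletA A W)"
proof -
  have "{\<tau>. walletA A W \<tau> \<noteq> 0} \<subseteq> snd ` {(a,\<tau>). W a \<tau> \<noteq> 0}"
  proof
    fix \<tau> assume "\<tau> \<in> {\<tau>. walletA A W \<tau> \<noteq> 0}"
    hence nz: "walletA A W \<tau> \<noteq> 0" by simp
    have "{a\<in>A. W a \<tau> \<noteq> 0} \<noteq> {}"
    proof
      assume e: "{a\<in>A. W a \<tau> \<noteq> 0} = {}"
      have "walletA A W \<tau> = 0" unfolding walletA_def e by simp
      thus False using nz by simp
    qed
    then obtain a where "W a \<tau> \<noteq> 0" by auto
    thus "\<tau> \<in> snd ` {(a,\<tau>). W a \<tau> \<noteq> 0}" by (intro image_eqI[of _ snd "(a,\<tau>)"]) auto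
  qed
  moreover have "finite {(a,\<tau>). W a \<tau> \<noteq> 0}" using assms unfolding finite_tokens_def .
  ultimately show ?thesis unfolding wallet_fin_def by (rule finite_subset[OF _ finite_imageI])
qed

lemma walletA_mono:
  assumes "finite_tokens W" "A \<subseteq> B"
  shows "walletA A W \<tau> \<le> walletA B W \<tau>"
proof -
  have "{a\<in>B. W a \<tau> \<noteq> 0} \<subseteq> {a. \<exists>\<tau>. W a \<tau> \<noteq> 0}" by auto
  hence "finite {a\<in>B. W a \<tau> \<noteq> 0}" using supp_fin[OF assms(1)] finite_subset by blast
  thus ?thesis unfolding walletA_def by (rule sum_mono2) (use assms(2) in auto)
qed

lemma walletA_local:
  assumes "A \<inter> {a. \<exists>\<tau>. W a \<tau> \<noteq> 0} \<subseteq> B" "B \<subseteq> A"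
  shows "walletA B W = walletA A W"
proof
  fix \<tau>
  have "{a\<in>B. W a \<tau> \<noteq> 0} = {a\<in>A. W a \<tau> \<noteq> 0}" using assms by blast
  thus "walletA B W \<tau> = walletA A W \<tau>" unfolding walletA_def by simp
qed

lemma f_mono:
  assumes "wealth_fun f" "wallet_fin w" "wallet_fin w'" "\<And>\<tau>. w \<tau> \<le> w' \<tau>"
  shows "f w \<le> f w'"
proof -
  define d where "d = (\<lambda>\<tau>. w' \<tau> - w \<tau>)"
  have "{\<tau>. d \<tau> \<noteq> 0} \<subseteq> {\<tau>. w' \<tau> \<noteq> 0}" unfolding d_def by auto
  hence fd: "wallet_fin d" using assms(3) unfolding wallet_fin_def using finite_subset by blast
  have "w' = (\<lambda>\<tau>. w \<tau> + d \<tau>)" unfolding d_def using assms(4) by (auto intro!: ext)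
  hence "f w' = f w + f d" using assms(1,2) fd unfolding wealth_fun_def by metis
  thus ?thesis by simp
qed

lemma wealth_mono:
  assumes "wealth_fun f" "finite_tokens (snd s)" "A \<subseteq> B"
  shows "wealthA f A s \<le> wealthA f B s"
  unfolding wealthA_def
  by (rule f_mono[OF assms(1) walletA_fin[OF assms(2)] walletA_fin[OF assms(2)]])
     (rule walletA_mono[OF assms(2,3)])

lemma int_max:
  fixes S :: "int set"
  assumes "x \<in> S" "\<forall>y\<in>S. y \<le> n"
  shows "\<exists>g\<in>S. \<forall>g'\<in>S. g' \<le> g"
proof -
  let ?T = "S \<inter> {x..n}"
  have fin: "finite ?T" by simp
  have xT: "x \<in> ?T" using assms by auto
  show ?thesis
  proof (intro bexI ballI)
    show "Max ?T \<in> S" using Max_in[OF fin] xT by blast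
    fix g' assume "g' \<in> S"
    show "g' \<le> Max ?T"
    proof (cases "x \<le> g'")
      case True
      hence "g' \<in> ?T" using \<open>g' \<in> S\<close> assms by auto
      thus ?thesis using Max_ge[OF fin] by blast
    next
      case False
      thus ?thesis using Max_ge[OF fin xT] by linarith
    qed
  qed
qed

theorem mainTheorem8:
  fixes f :: "('t \<Rightarrow> nat) \<Rightarrow> nat"
    and step :: "('c,'a,'t) bstate \<Rightarrow> 'x \<Rightarrow> ('c,'a,'t) bstate option"
    and S0 :: "('c,'a,'t) bstate set"
    and \<kappa> :: "'a set \<Rightarrow> 'x set \<Rightarrow> 'x set"
    and A :: "'a set" and s :: "('c,'a,'t) bstate" and Y :: "'x list"
  assumes "countable (UNIV :: 'a set)" and "infinite (UNIV :: 'a set)"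
    and "contract step S0"
    and "wealth_fun f"
    and "bounded_contract f step S0"
    and "deducibility \<kappa>"
    and "reachable step S0 s"
  shows "(\<exists>g\<in>gains f step \<kappa> A s. \<forall>g'\<in>gains f step \<kappa> A s. g' \<le> g)
    \<and> (xG f step \<kappa> A s Y > 0 \<longrightarrow> Y \<notin> lists (\<kappa> A {}))
    \<and> (\<exists>A0. A0 \<subseteq> A \<and> finite A0 \<and>
          (\<forall>B. A0 \<subseteq> B \<and> B \<subseteq> A \<longrightarrow> xG f step \<kappa> A0 s Y = xG f step \<kappa> B s Y))"
proof -
  note ct = assms(3) and wf = assms(4)
  obtain s0 X0 where s0: "s0 \<in> S0" and X0: "run step s0 X0 = s"
    using assms(7) unfolding reachable_def reachable_from_def by blast
  have ft: "finite_tokens (snd s)"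
    using run_ft[OF ct, of s0 X0] s0 ct X0 unfolding contract_def by auto
  have ftr: "\<And>Z. finite_tokens (snd (run step s Z))" using run_ft[OF ct ft] .
  obtain n where n: "\<And>t. reachable_from step s0 t \<Longrightarrow> wealthA f UNIV t < n"
    using assms(5) s0 unfolding bounded_contract_def by blast
  have nb: "\<And>Z. wealthA f UNIV (run step s Z) < n"
  proof -
    fix Z
    have "reachable_from step s0 (run step s Z)" unfolding reachable_from_def
      by (rule exI[of _ "X0@Z"]) (simp add: run_append X0)
    thus "wealthA f UNIV (run step s Z) < n" by (rule n)
  qed
  have gle: "\<And>B Z. gain f step B s Z \<le> int n"
  proof -
    fix B Z
    have "wealthA f B (run step s Z) \<le> wealthA f UNIV (run step s Z)"
      using wealth_mono[OF wf ftr] by blast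
    thus "gain f step B s Z \<le> int n" unfolding gain_def using nb[of Z] by linarith
  qed
  have maxex: "\<And>B. \<exists>g\<in>gains f step \<kappa> B s. \<forall>g'\<in>gains f step \<kappa> B s. g' \<le> g"
  proof -
    fix B
    have "gain f step B s [] \<in> gains f step \<kappa> B s" unfolding gains_def by auto
    moreover have "\<forall>y\<in>gains f step \<kappa> B s. y \<le> int n" unfolding gains_def using gle by auto
    ultimately show "\<exists>g\<in>gains f step \<kappa> B s. \<forall>g'\<in>gains f step \<kappa> B s. g' \<le> g"
      by (rule int_max)
  qed
  have uGp: "\<And>B. uG f step \<kappa> B s \<in> gains f step \<kappa> B s \<and>
     (\<forall>g'\<in>gains f step \<kappa> B s. g' \<le> uG f step \<kappa> B s)"
  proof -
    fix B
    obtain g where g: "g \<in> gains f step \<kappa> B s" "\<forall>g'\<in>gains f step \<kappa> B s. g' \<le> g"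
      using maxex by blast
    have "uG f step \<kappa> B s = g" unfolding uG_def
      by (rule Greatest_equality) (use g in auto)
    thus "?thesis B" using g by simp
  qed
  have P2: "xG f step \<kappa> A s Y > 0 \<longrightarrow> Y \<notin> lists (\<kappa> A {})"
  proof
    assume "xG f step \<kappa> A s Y > 0"
    hence "gain f step A s Y > uG f step \<kappa> A s" unfolding xG_def by simp
    thus "Y \<notin> lists (\<kappa> A {})" using uGp[of A] unfolding gains_def by force
  qed
  note D = assms(6)[unfolded deducibility_def]
  have dk2: "\<forall>A A' X X'. A \<subseteq> A' \<longrightarrow> X \<subseteq> X' \<longrightarrow> \<kappa> A X \<subseteq> \<kappa> A' X'"
    using D[THEN conjunct2, THEN conjunct2, THEN conjunct1] .
  have dk3: "\<forall>X0. finite X0 \<longrightarrow> (\<exists>A0. finite A0 \<and> X0 \<subseteq> \<kappa> A0 {})"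
    using D[THEN conjunct2, THEN conjunct2, THEN conjunct2, THEN conjunct2, THEN conjunct1] .
  have dk4: "\<forall>A B X. \<kappa> A X \<inter> \<kappa> B X \<subseteq> \<kappa> (A \<inter> B) X"
    using D[THEN conjunct2, THEN conjunct2, THEN conjunct2, THEN conjunct2, THEN conjunct2, THEN conjunct2] .
  obtain Ys where Ys: "Ys \<in> lists (\<kappa> A {})" "uG f step \<kappa> A s = gain f step A s Ys"
    using uGp[of A] unfolding gains_def by blast
  obtain A1 where A1: "finite A1" "set Ys \<subseteq> \<kappa> A1 {}" using dk3 by blast
  have YsA: "set Ys \<subseteq> \<kappa> A {}" using Ys(1) by auto
  have YsA1: "set Ys \<subseteq> \<kappa> (A \<inter> A1) {}" using dk4 YsA A1(2) by blast
  define supp where "supp = (\<lambda>W::('a,'t) wstate. {a. \<exists>\<tau>. W a \<tau> \<noteq> 0})"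
  define H where "H = supp (snd s) \<union> supp (snd (run step s Ys)) \<union> supp (snd (run step s Y))"
  have fH: "finite H" unfolding H_def supp_def by (intro finite_UnI supp_fin ft ftr)
  define A0 where "A0 = (A \<inter> A1) \<union> (A \<inter> H)"
  have A0A: "A0 \<subseteq> A" unfolding A0_def by blast
  have fA0: "finite A0" unfolding A0_def using A1(1) fH by simp
  have key: "\<And>B. A0 \<subseteq> B \<Longrightarrow> B \<subseteq> A \<Longrightarrow>
      uG f step \<kappa> B s = uG f step \<kappa> A s \<and> gain f step B s Y = gain f step A s Y"
  proof -
    fix B assume B: "A0 \<subseteq> B" "B \<subseteq> A"
    have loc: "\<And>W. W \<in> {snd s, snd (run step s Ys), snd (run step s Y)} \<Longrightarrow>
        walletA B W = walletA A W"
      by (rule walletA_local) (use B in \<open>auto simp: A0_def H_def supp_def\<close>)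
    have ws: "wealthA f B s = wealthA f A s" unfolding wealthA_def using loc by simp
    have wYs: "wealthA f B (run step s Ys) = wealthA f A (run step s Ys)"
      unfolding wealthA_def using loc by simp
    have wY: "wealthA f B (run step s Y) = wealthA f A (run step s Y)"
      unfolding wealthA_def using loc by simp
    have gY: "gain f step B s Y = gain f step A s Y" unfolding gain_def using ws wY by simp
    have "A \<inter> A1 \<subseteq> B" using B(1) unfolding A0_def by blast
    hence "\<kappa> (A \<inter> A1) {} \<subseteq> \<kappa> B {}" using dk2 by blast
    hence "Ys \<in> lists (\<kappa> B {})" using YsA1 by auto
    hence "gain f step B s Ys \<in> gains f step \<kappa> B s" unfolding gains_def by blast
    hence ge: "gain f step B s Ys \<le> uG f step \<kappa> B s" using uGp by blast
    have gYs: "gain f step B s Ys = gain f step A s Ys" unfolding gain_def using ws wYs by simp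
    obtain Yb where Yb: "Yb \<in> lists (\<kappa> B {})" "uG f step \<kappa> B s = gain f step B s Yb"
      using uGp[of B] unfolding gains_def by blast
    have "\<kappa> B {} \<subseteq> \<kappa> A {}" using dk2 B by blast
    hence "Yb \<in> lists (\<kappa> A {})" using Yb(1) by auto
    hence "gain f step A s Yb \<in> gains f step \<kappa> A s" unfolding gains_def by blast
    hence le1: "gain f step A s Yb \<le> uG f step \<kappa> A s" using uGp by blast
    have "wealthA f B (run step s Yb) \<le> wealthA f A (run step s Yb)"
      using wealth_mono[OF wf ftr B(2)] .
    hence "gain f step B s Yb \<le> gain f step A s Yb" unfolding gain_def using ws by simp
    show "uG f step \<kappa> B s = uG f step \<kappa> A s \<and> gain f step B s Y = gain f step A s Y"
      using ge gYs Ys(2) Yb(2) le1 \<open>gain f step B s Yb \<le> gain f step A s Yb\<close> gY by linarith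
  qed
  have P3: "\<forall>B. A0 \<subseteq> B \<and> B \<subseteq> A \<longrightarrow> xG f step \<kappa> A0 s Y = xG f step \<kappa> B s Y"
  proof (intro allI impI)
    fix B assume "A0 \<subseteq> B \<and> B \<subseteq> A"
    thus "xG f step \<kappa> A0 s Y = xG f step \<kappa> B s Y"
      using key[of B] key[of A0] A0A unfolding xG_def by auto
  qed
  have P3': "\<exists>A0. A0 \<subseteq> A \<and> finite A0 \<and>
          (\<forall>B. A0 \<subseteq> B \<and> B \<subseteq> A \<longrightarrow> xG f step \<kappa> A0 s Y = xG f step \<kappa> B s Y)"
    using A0A fA0 P3 by blast
  show ?thesis by (intro conjI maxex P2 P3')
qed

end
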